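(* Let $\Gamma$ be a finitely generated linear group whose centre is trivial. Then $\Gamma$ is uniquely directly decomposable.
   Context: A group is linear if it is a subgroup of $\mathrm{GL}_d(K)$ for some integer $d$ and field $K$. A group is indecomposable if it is nontrivial and, for every isomorphism with a direct product $\Gamma_1\times\Gamma_2$, one factor is trivial. A group is uniquely directly decomposable if it is isomorphic to a restricted direct sum of indecomposable groups, and this in a unique way up to isomorphism of the factors (i.e. any two such decompositions have factors that can be matched bijectively with isomorphic matched factors). The trivial group counts as uniquely directly decomposable (empty sum). *)

theory Defs
  imports "Jordan_Normal_Form.Matrix" "HOL-Algebra.Product_Groups"
begin

definition GL_group :: "nat \<Rightarrow> 'k::field itself \<Rightarrow> 'k mat monoid" where
  "GL_group d ty = \<lparr> carrier = {A \<in> carrier_mat d d. invertible_mat A},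
                     mult = (*), one = 1\<^sub>m d \<rparr>"

definition linear_group_over :: "'k::field itself \<Rightarrow> ('a, 'b) monoid_scheme \<Rightarrow> bool" where
  "linear_group_over ty G \<longleftrightarrow>
     group G \<and> (\<exists>d (\<phi> :: 'a \<Rightarrow> 'k mat). \<phi> \<in> hom G (GL_group d ty) \<and> inj_on \<phi> (carrier G))"

definition finitely_generated_group :: "('a, 'b) monoid_scheme \<Rightarrow> bool" where
  "finitely_generated_group G \<longleftrightarrow>
     (\<exists>S. finite S \<and> S \<subseteq> carrier G \<and> generate G S = carrier G)"

definition group_center :: "('a, 'b) monoid_scheme \<Rightarrow> 'a set" where
  "group_center G = {z \<in> carrier G. \<forall>g \<in> carrier G. z \<otimes>\<^bsub>G\<^esub> g = g \<otimes>\<^bsub>G\<^esub> z}"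

text \<open>Indecomposable: nontrivial, and any isomorphism with a direct product has a trivial
  factor. Factors can be taken with carrier type 'a, since each factor embeds into the group.\<close>
definition indecomposable_group :: "('a, 'b) monoid_scheme \<Rightarrow> bool" where
  "indecomposable_group H \<longleftrightarrow> group H \<and> carrier H \<noteq> {\<one>\<^bsub>H\<^esub>} \<and>
     (\<forall>(A :: 'a monoid) (B :: 'a monoid). group A \<and> group B \<and> H \<cong> A \<times>\<times> B \<longrightarrow>
        carrier A = {\<one>\<^bsub>A\<^esub>} \<or> carrier B = {\<one>\<^bsub>B\<^esub>})"

text \<open>A decomposition of G as restricted direct sum of indecomposable groups, indexed by I.
  Indices and factor carriers live in type 'a (no loss: nontrivial factors embed into G).\<close>
definition direct_decomposition :: "('a, 'b) monoid_scheme \<Rightarrow> 'a set \<Rightarrow> ('a \<Rightarrow> 'a monoid) \<Rightarrow> bool" where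
  "direct_decomposition G I F \<longleftrightarrow>
     (\<forall>i \<in> I. indecomposable_group (F i)) \<and> G \<cong> sum_group I F"

definition uniquely_directly_decomposable :: "('a, 'b) monoid_scheme \<Rightarrow> bool" where
  "uniquely_directly_decomposable G \<longleftrightarrow>
     (\<exists>I F. direct_decomposition G I F) \<and>
     (\<forall>I F J F'. direct_decomposition G I F \<and> direct_decomposition G J F' \<longrightarrow>
        (\<exists>\<sigma>. bij_betw \<sigma> I J \<and> (\<forall>i \<in> I. F i \<cong> F' (\<sigma> i))))"

end

theory Submission
  imports Defs "Jordan_Normal_Form.VS_Connect"
begin

lemma mat_entry_mult:
  fixes A B :: "'k::field mat"
  assumes "A \<in> carrier_mat d d" "B \<in> carrier_mat d d" "r < d" "s < d"
  shows "(A * B) $$ (r,s) = (\<Sum>t<d. A $$ (r,t) * B $$ (t,s))"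
  using assms by (simp add: scalar_prod_def row_def col_def lessThan_atLeast0 mult.commute)

lemma LA_bound:
  fixes M N :: "'i \<Rightarrow> 'k::field mat"
  assumes finJ: "finite J" and MC: "\<forall>i\<in>J. M i \<in> carrier_mat d d" and NC: "\<forall>i\<in>J. N i \<in> carrier_mat d d"
    and comm: "\<forall>i\<in>J. \<forall>k\<in>J. i \<noteq> k \<longrightarrow> M i * N k = N k * M i"
    and ncomm: "\<forall>i\<in>J. M i * N i \<noteq> N i * M i"
  shows "card J \<le> d * d"
proof -
  interpret V: vec_space "TYPE('k)" "d*d" .
  define f where "f i = vec (d*d) (\<lambda>t. M i $$ (t div d, t mod d))" for i
  have idx: "r * d + c < d * d" if "r < d" "c < d" for r c :: nat
  proof -
    have "r * d + c < r * d + d" using that by simp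
    also have "\<dots> = (r+1) * d" by simp
    also have "\<dots> \<le> d * d" using that by (metis Suc_eq_plus1 Suc_leI mult_le_mono1 mult.commute)
    finally show ?thesis by simp
  qed
  have fM: "f i $ (r*d+c) = M i $$ (r,c)" if "r < d" "c < d" for i r c
    using that idx[OF that] by (simp add: f_def)
  have fC: "f i \<in> carrier_vec (d*d)" for i by (simp add: f_def)
  have Meq: "M i = M k" if "f i = f k" "i \<in> J" "k \<in> J" for i k
  proof (rule eq_matI)
    show "dim_row (M i) = dim_row (M k)" using MC \<open>i \<in> J\<close> \<open>k \<in> J\<close> by (metis carrier_matD(1))
    show "dim_col (M i) = dim_col (M k)" using MC \<open>i \<in> J\<close> \<open>k \<in> J\<close> by (metis carrier_matD(2))
    fix r c assume "r < dim_row (M k)" "c < dim_col (M k)"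
    then have "r < d" "c < d" using MC \<open>k \<in> J\<close> by auto
    then show "M i $$ (r, c) = M k $$ (r, c)" using fM[of r c i] fM[of r c k] \<open>f i = f k\<close> by simp
  qed
  have inj: "inj_on f J"
  proof (rule inj_onI)
    fix i k assume "i \<in> J" "k \<in> J" "f i = f k"
    then have "M i = M k" using Meq[of i k] \<open>i \<in> J\<close> \<open>k \<in> J\<close> by blast
    show "i = k"
    proof (rule ccontr)
      assume "i \<noteq> k"
      then have "M i * N k = N k * M i" using comm \<open>i \<in> J\<close> \<open>k \<in> J\<close> by blast
      then show False using ncomm \<open>k \<in> J\<close> \<open>M i = M k\<close> by auto
    qed
  qed
  have li: "V.lin_indpt (f ` J)"
  proof
    assume "V.lin_dep (f ` J)"
    then obtain a v where a: "a \<in> f ` J \<rightarrow> UNIV" and lc: "V.lincomb a (f ` J) = 0\<^sub>v (d*d)"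
      and v: "v \<in> f ` J" and av: "a v \<noteq> 0"
      using V.finite_lin_dep[of "f ` J"] finJ fC by auto
    obtain k where k: "k \<in> J" "v = f k" using v by auto
    define c where "c i = a (f i)" for i
    have sum0: "(\<Sum>i\<in>J. c i * M i $$ (r,s)) = 0" if "r < d" "s < d" for r s
    proof -
      have "V.lincomb a (f ` J) $ (r*d+s) = 0" using lc idx[OF that] by simp
      then have "(\<Sum>w\<in>f ` J. a w * w $ (r*d+s)) = 0"
        using V.lincomb_index[of "r*d+s" "f ` J" a] idx[OF that] fC by auto
      then have "(\<Sum>i\<in>J. a (f i) * f i $ (r*d+s)) = 0"
        by (simp add: sum.reindex[OF inj])
      then show ?thesis using fM[OF that] by (simp add: c_def)
    qed
    have ck: "c k \<noteq> 0" using av k by (simp add: c_def)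
    have Mk: "M k \<in> carrier_mat d d" and Nk: "N k \<in> carrier_mat d d" using MC NC k by auto
    have "M k * N k = N k * M k"
    proof (rule eq_matI)
      show "dim_row (M k * N k) = dim_row (N k * M k)" using Mk Nk by simp
      show "dim_col (M k * N k) = dim_col (N k * M k)" using Mk Nk by simp
      fix r s assume "r < dim_row (N k * M k)" "s < dim_col (N k * M k)"
      then have rs: "r < d" "s < d" using Mk Nk by auto
      have "(\<Sum>i\<in>J. c i * ((M i * N k) $$ (r,s) - (N k * M i) $$ (r,s)))
          = (\<Sum>i\<in>J. c i * ((\<Sum>t<d. M i $$ (r,t) * N k $$ (t,s)) - (\<Sum>t<d. N k $$ (r,t) * M i $$ (t,s))))"
      proof (intro sum.cong refl)
        fix i assume "i \<in> J"
        then have Mi: "M i \<in> carrier_mat d d" using MC by auto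
        show "c i * ((M i * N k) $$ (r,s) - (N k * M i) $$ (r,s))
          = c i * ((\<Sum>t<d. M i $$ (r,t) * N k $$ (t,s)) - (\<Sum>t<d. N k $$ (r,t) * M i $$ (t,s)))"
          using mat_entry_mult[OF Mi Nk rs] mat_entry_mult[OF Nk Mi rs] by simp
      qed
      also have "\<dots> = (\<Sum>t<d. (\<Sum>i\<in>J. c i * M i $$ (r,t)) * N k $$ (t,s))
                    - (\<Sum>t<d. N k $$ (r,t) * (\<Sum>i\<in>J. c i * M i $$ (t,s)))"
        by (simp add: right_diff_distrib sum_subtractf sum_distrib_left sum_distrib_right
            sum.swap[of _ J] mult_ac)
      also have "\<dots> = 0" using sum0 rs by simp
      finally have S: "(\<Sum>i\<in>J. c i * ((M i * N k) $$ (r,s) - (N k * M i) $$ (r,s))) = 0" .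
      have "(\<Sum>i\<in>J. c i * ((M i * N k) $$ (r,s) - (N k * M i) $$ (r,s)))
            = c k * ((M k * N k) $$ (r,s) - (N k * M k) $$ (r,s))"
      proof -
        have "(\<Sum>i\<in>J - {k}. c i * ((M i * N k) $$ (r,s) - (N k * M i) $$ (r,s))) = 0"
          using comm k by (intro sum.neutral) auto
        then show ?thesis using sum.remove[OF finJ k(1), of "\<lambda>i. c i * ((M i * N k) $$ (r,s) - (N k * M i) $$ (r,s))"]
          by simp
      qed
      then have "c k * ((M k * N k) $$ (r,s) - (N k * M k) $$ (r,s)) = 0" using S by simp
      then show "(M k * N k) $$ (r, s) = (N k * M k) $$ (r, s)" using ck by simp
    qed
    then show False using ncomm k by auto
  qed
  have "card (f ` J) \<le> V.dim"
    using V.li_le_dim(2)[OF V.fin_dim _ li] fC by auto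
  then show ?thesis using card_image[OF inj] V.dim_is_n by simp
qed

locale sgrp =
  fixes I :: "'i set" and F :: "'i \<Rightarrow> ('g, 'c) monoid_scheme"
  assumes grp: "\<And>i. i \<in> I \<Longrightarrow> group (F i)"
begin

abbreviation "P \<equiv> sum_group I F"

definition emb :: "'i \<Rightarrow> 'g \<Rightarrow> 'i \<Rightarrow> 'g" where
  "emb i x = (\<lambda>k\<in>I. if k = i then x else \<one>\<^bsub>F k\<^esub>)"

definition coproj :: "'i \<Rightarrow> ('i \<Rightarrow> 'g) \<Rightarrow> 'i \<Rightarrow> 'g" where
  "coproj j q = (\<lambda>k\<in>I. if k = j then \<one>\<^bsub>F k\<^esub> else q k)"

lemma carrier_P: "carrier P = {x \<in> \<Pi>\<^sub>E i\<in>I. carrier (F i). finite {i \<in> I. x i \<noteq> \<one>\<^bsub>F i\<^esub>}}"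
  by (rule carrier_sum_group) (rule grp)

lemma group_P: "group P" by (rule sum_group) (rule grp)

lemma one_P: "\<one>\<^bsub>P\<^esub> = (\<lambda>i\<in>I. \<one>\<^bsub>F i\<^esub>)" by simp

lemma mult_P: "x \<otimes>\<^bsub>P\<^esub> y = (\<lambda>i\<in>I. x i \<otimes>\<^bsub>F i\<^esub> y i)" by simp

lemma P_comp: "x \<in> carrier P \<Longrightarrow> k \<in> I \<Longrightarrow> x k \<in> carrier (F k)"
  by (auto simp: carrier_P PiE_iff)

lemma P_ext: "x \<in> carrier P \<Longrightarrow> k \<notin> I \<Longrightarrow> x k = undefined"
  by (auto simp: carrier_P PiE_iff extensional_def)

lemma P_eqI: "x \<in> carrier P \<Longrightarrow> y \<in> carrier P \<Longrightarrow> (\<And>k. k \<in> I \<Longrightarrow> x k = y k) \<Longrightarrow> x = y"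
  using P_ext by (metis ext)

lemma P_one_iff: "x \<in> carrier P \<Longrightarrow> x = \<one>\<^bsub>P\<^esub> \<longleftrightarrow> (\<forall>k\<in>I. x k = \<one>\<^bsub>F k\<^esub>)"
proof
  assume "x \<in> carrier P" "x = \<one>\<^bsub>P\<^esub>" then show "\<forall>k\<in>I. x k = \<one>\<^bsub>F k\<^esub>" by simp
next
  assume x: "x \<in> carrier P" "\<forall>k\<in>I. x k = \<one>\<^bsub>F k\<^esub>"
  have "\<one>\<^bsub>P\<^esub> \<in> carrier P" using group.is_monoid[OF group_P] monoid.one_closed by blast
  then show "x = \<one>\<^bsub>P\<^esub>"
    by (intro P_eqI) (use x in auto)
qed

lemma inv_P_apply: "x \<in> carrier P \<Longrightarrow> k \<in> I \<Longrightarrow> (inv\<^bsub>P\<^esub> x) k = inv\<^bsub>F k\<^esub> (x k)"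
  using inv_sum_group[of I F x] grp by simp

lemma emb_apply: "k \<in> I \<Longrightarrow> emb i x k = (if k = i then x else \<one>\<^bsub>F k\<^esub>)"
  by (simp add: emb_def)

lemma emb_carrier: "i \<in> I \<Longrightarrow> x \<in> carrier (F i) \<Longrightarrow> emb i x \<in> carrier P"
proof -
  assume i: "i \<in> I" and x: "x \<in> carrier (F i)"
  have "{k \<in> I. emb i x k \<noteq> \<one>\<^bsub>F k\<^esub>} \<subseteq> {i}" by (auto simp: emb_def)
  then have "finite {k \<in> I. emb i x k \<noteq> \<one>\<^bsub>F k\<^esub>}" using finite_subset by blast
  moreover have "emb i x \<in> (\<Pi>\<^sub>E k\<in>I. carrier (F k))"
    using x grp by (auto simp: emb_def PiE_iff group.is_monoid monoid.one_closed)
  ultimately show ?thesis by (simp add: carrier_P)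
qed

lemma emb_hom: "i \<in> I \<Longrightarrow> emb i \<in> hom (F i) P"
proof (rule homI)
  assume i: "i \<in> I"
  show "emb i x \<in> carrier P" if "x \<in> carrier (F i)" for x using emb_carrier[OF i that] .
  show "emb i (x \<otimes>\<^bsub>F i\<^esub> y) = emb i x \<otimes>\<^bsub>P\<^esub> emb i y" if "x \<in> carrier (F i)" "y \<in> carrier (F i)" for x y
    using grp by (auto simp: emb_def group.is_monoid monoid.l_one)
qed

lemma emb_one: "i \<in> I \<Longrightarrow> emb i \<one>\<^bsub>F i\<^esub> = \<one>\<^bsub>P\<^esub>"
  by (auto simp: emb_def)

lemma emb_inj: "i \<in> I \<Longrightarrow> inj_on (emb i) (carrier (F i))"
  by (rule inj_onI) (metis emb_apply)

lemma emb_eq_idx: "i \<in> I \<Longrightarrow> k \<in> I \<Longrightarrow> emb i a = emb k b \<Longrightarrow> a \<noteq> \<one>\<^bsub>F i\<^esub> \<Longrightarrow> i = k"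
  by (metis emb_apply)

lemma eval_hom: "i \<in> I \<Longrightarrow> (\<lambda>x. x i) \<in> hom P (F i)"
  by (rule homI) (auto simp: P_comp)

lemma coproj_carrier: "q \<in> carrier P \<Longrightarrow> coproj j q \<in> carrier P"
proof -
  assume q: "q \<in> carrier P"
  have "{k \<in> I. coproj j q k \<noteq> \<one>\<^bsub>F k\<^esub>} \<subseteq> {k \<in> I. q k \<noteq> \<one>\<^bsub>F k\<^esub>}" by (auto simp: coproj_def)
  then have "finite {k \<in> I. coproj j q k \<noteq> \<one>\<^bsub>F k\<^esub>}" using q finite_subset by (auto simp: carrier_P)
  moreover have "coproj j q \<in> (\<Pi>\<^sub>E k\<in>I. carrier (F k))"
    using q grp by (auto simp: coproj_def PiE_iff group.is_monoid monoid.one_closed P_comp)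
  ultimately show ?thesis by (simp add: carrier_P)
qed

lemma coproj_apply: "k \<in> I \<Longrightarrow> coproj j q k = (if k = j then \<one>\<^bsub>F k\<^esub> else q k)"
  by (simp add: coproj_def)

lemma coproj_hom: "coproj j \<in> hom P P"
proof (rule homI)
  show "coproj j x \<in> carrier P" if "x \<in> carrier P" for x using coproj_carrier[OF that] .
  show "coproj j (x \<otimes>\<^bsub>P\<^esub> y) = coproj j x \<otimes>\<^bsub>P\<^esub> coproj j y" if "x \<in> carrier P" "y \<in> carrier P" for x y
    using grp by (auto simp: coproj_def group.is_monoid monoid.l_one)
qed

lemma proj_hom: "j \<in> I \<Longrightarrow> (\<lambda>q. emb j (q j)) \<in> hom P P"
proof -
  assume j: "j \<in> I"
  have "emb j \<circ> (\<lambda>q. q j) \<in> hom P P" by (rule hom_compose[OF eval_hom[OF j] emb_hom[OF j]])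
  then show ?thesis by (simp add: comp_def)
qed

lemma proj_coproj: "q \<in> carrier P \<Longrightarrow> j \<in> I \<Longrightarrow> emb j (q j) \<otimes>\<^bsub>P\<^esub> coproj j q = q"
proof -
  assume q: "q \<in> carrier P" and j: "j \<in> I"
  have "emb j (q j) \<otimes>\<^bsub>P\<^esub> coproj j q \<in> carrier P"
    using monoid.m_closed[OF group.is_monoid[OF group_P] emb_carrier[OF j P_comp[OF q j]] coproj_carrier[OF q]] .
  then show ?thesis
    by (rule P_eqI) (use q j grp P_comp in \<open>auto simp: emb_def coproj_def group.is_monoid monoid.l_one monoid.r_one\<close>)
qed

lemma comm_iff: "a \<in> carrier P \<Longrightarrow> b \<in> carrier P \<Longrightarrow>
   a \<otimes>\<^bsub>P\<^esub> b = b \<otimes>\<^bsub>P\<^esub> a \<longleftrightarrow> (\<forall>k\<in>I. a k \<otimes>\<^bsub>F k\<^esub> b k = b k \<otimes>\<^bsub>F k\<^esub> a k)"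
  by (auto simp: fun_eq_iff restrict_def)

end

lemma hom_one':
  "group G \<Longrightarrow> group H \<Longrightarrow> h \<in> hom G H \<Longrightarrow> h \<one>\<^bsub>G\<^esub> = \<one>\<^bsub>H\<^esub>"
  by (simp add: group_hom.hom_one group_hom_def group_hom_axioms_def)

lemma center_iso:
  assumes G: "group G" and H: "group H" and h: "h \<in> iso G H" and Z: "group_center G = {\<one>\<^bsub>G\<^esub>}"
  shows "group_center H = {\<one>\<^bsub>H\<^esub>}"
proof -
  interpret G: group G by fact
  interpret H: group H by fact
  have hh: "h \<in> hom G H" and bij: "bij_betw h (carrier G) (carrier H)" using h by (auto simp: iso_def)
  have inj: "inj_on h (carrier G)" using bij by (auto simp: bij_betw_def)
  have "z = \<one>\<^bsub>H\<^esub>" if z: "z \<in> group_center H" for z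
  proof -
    have zH: "z \<in> carrier H" using z by (simp add: group_center_def)
    define z' where "z' = inv_into (carrier G) h z"
    have z'G: "z' \<in> carrier G" using bij zH by (metis bij_betw_def inv_into_into z'_def)
    have hz': "h z' = z" using bij zH by (metis bij_betw_def f_inv_into_f z'_def)
    have "z' \<in> group_center G"
      unfolding group_center_def
    proof (intro CollectI conjI ballI)
      show "z' \<in> carrier G" by fact
      fix g assume g: "g \<in> carrier G"
      have "h (z' \<otimes>\<^bsub>G\<^esub> g) = h (g \<otimes>\<^bsub>G\<^esub> z')"
        using hom_mult[OF hh z'G g] hom_mult[OF hh g z'G] hz' z g hom_in_carrier[OF hh g]
        by (simp add: group_center_def)
      then show "z' \<otimes>\<^bsub>G\<^esub> g = g \<otimes>\<^bsub>G\<^esub> z'" using inj g z'G by (meson G.m_closed inj_onD)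
    qed
    then have "z' = \<one>\<^bsub>G\<^esub>" using Z by simp
    then show ?thesis using hz' hom_one'[OF G.group_axioms H.group_axioms hh] by simp
  qed
  moreover have "\<one>\<^bsub>H\<^esub> \<in> group_center H" by (simp add: group_center_def)
  ultimately show ?thesis by blast
qed

context sgrp begin

lemma emb_comm: "i \<in> I \<Longrightarrow> x \<in> carrier (F i) \<Longrightarrow> y \<in> carrier P \<Longrightarrow> y i = \<one>\<^bsub>F i\<^esub> \<Longrightarrow>
   emb i x \<otimes>\<^bsub>P\<^esub> y = y \<otimes>\<^bsub>P\<^esub> emb i x"
  using grp P_comp by (subst comm_iff) (auto simp: emb_apply emb_carrier group.is_monoid)

lemma center_comp:
  assumes Z: "group_center P = {\<one>\<^bsub>P\<^esub>}" and i: "i \<in> I" and z: "z \<in> carrier (F i)"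
    and c: "\<forall>x\<in>carrier (F i). z \<otimes>\<^bsub>F i\<^esub> x = x \<otimes>\<^bsub>F i\<^esub> z"
  shows "z = \<one>\<^bsub>F i\<^esub>"
proof -
  have "emb i z \<in> group_center P"
    unfolding group_center_def
  proof (intro CollectI conjI ballI)
    show "emb i z \<in> carrier P" using emb_carrier[OF i z] .
    fix g assume g: "g \<in> carrier P"
    show "emb i z \<otimes>\<^bsub>P\<^esub> g = g \<otimes>\<^bsub>P\<^esub> emb i z"
      using grp P_comp[OF g] c g i z by (subst comm_iff) (auto simp: emb_apply emb_carrier group.is_monoid)
  qed
  then have "emb i z = \<one>\<^bsub>P\<^esub>" using Z by simp
  then have "emb i z i = \<one>\<^bsub>P\<^esub> i" by simp
  then show ?thesis using i by (simp add: emb_apply)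
qed

lemma center_supp:
  assumes Z: "group_center P = {\<one>\<^bsub>P\<^esub>}" and i: "i \<in> I" and z: "z \<in> carrier P"
    and c: "\<forall>y\<in>carrier P. y i = \<one>\<^bsub>F i\<^esub> \<longrightarrow> z \<otimes>\<^bsub>P\<^esub> y = y \<otimes>\<^bsub>P\<^esub> z"
  shows "z = emb i (z i)"
proof (rule P_eqI[OF z emb_carrier[OF i P_comp[OF z i]]])
  fix k assume k: "k \<in> I"
  show "z k = emb i (z i) k"
  proof (cases "k = i")
    case True then show ?thesis using k by (simp add: emb_apply)
  next
    case False
    have "z k = \<one>\<^bsub>F k\<^esub>"
    proof (rule center_comp[OF Z k P_comp[OF z k]], intro ballI)
      fix w assume w: "w \<in> carrier (F k)"
      have e: "emb k w \<in> carrier P" "emb k w i = \<one>\<^bsub>F i\<^esub>" using emb_carrier[OF k w] False i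
        by (auto simp: emb_apply)
      then have "z \<otimes>\<^bsub>P\<^esub> emb k w = emb k w \<otimes>\<^bsub>P\<^esub> z" using c by blast
      then show "z k \<otimes>\<^bsub>F k\<^esub> w = w \<otimes>\<^bsub>F k\<^esub> z k"
        using comm_iff[OF z e(1)] k by (auto simp: emb_apply)
    qed
    then show ?thesis using False k by (simp add: emb_apply)
  qed
qed

lemma comm_proj: "q \<in> carrier P \<Longrightarrow> r \<in> carrier P \<Longrightarrow> j \<in> I \<Longrightarrow> q \<otimes>\<^bsub>P\<^esub> r = r \<otimes>\<^bsub>P\<^esub> q \<Longrightarrow>
   emb j (q j) \<otimes>\<^bsub>P\<^esub> r = r \<otimes>\<^bsub>P\<^esub> emb j (q j)"
proof -
  assume a: "q \<in> carrier P" "r \<in> carrier P" "j \<in> I" "q \<otimes>\<^bsub>P\<^esub> r = r \<otimes>\<^bsub>P\<^esub> q"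
  then have H: "\<forall>k\<in>I. q k \<otimes>\<^bsub>F k\<^esub> r k = r k \<otimes>\<^bsub>F k\<^esub> q k" using comm_iff[of q r] by blast
  show ?thesis using a H grp P_comp
    by (subst comm_iff) (auto simp: emb_apply emb_carrier group.is_monoid simp del: mult_sum_group)
qed

lemma comm_coproj: "q \<in> carrier P \<Longrightarrow> r \<in> carrier P \<Longrightarrow> q \<otimes>\<^bsub>P\<^esub> r = r \<otimes>\<^bsub>P\<^esub> q \<Longrightarrow>
   coproj j q \<otimes>\<^bsub>P\<^esub> r = r \<otimes>\<^bsub>P\<^esub> coproj j q"
proof -
  assume a: "q \<in> carrier P" "r \<in> carrier P" "q \<otimes>\<^bsub>P\<^esub> r = r \<otimes>\<^bsub>P\<^esub> q"
  then have H: "\<forall>k\<in>I. q k \<otimes>\<^bsub>F k\<^esub> r k = r k \<otimes>\<^bsub>F k\<^esub> q k" using comm_iff[of q r] by blast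
  show ?thesis using a H grp P_comp
    by (subst comm_iff) (auto simp: coproj_apply coproj_carrier group.is_monoid simp del: mult_sum_group)
qed

lemma coproj_emb: "j \<in> I \<Longrightarrow> coproj j (emb j a) = \<one>\<^bsub>P\<^esub>"
  by (auto simp: coproj_def emb_def)

lemma emb_coproj: "j \<in> I \<Longrightarrow> emb j (coproj j q j) = \<one>\<^bsub>P\<^esub>"
  by (simp add: coproj_apply emb_one)

end

locale sgrp2 = A: sgrp I F + B: sgrp J F'
  for I :: "'i set" and F :: "'i \<Rightarrow> 'g monoid" and J :: "'j set" and F' :: "'j \<Rightarrow> ('h, 'd) monoid_scheme"
begin

lemma U1:
  assumes psi: "\<psi> \<in> iso A.P B.P" and Z: "group_center A.P = {\<one>\<^bsub>A.P\<^esub>}"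
    and i: "i \<in> I" and ind: "indecomposable_group (F i)"
  shows "\<exists>j\<in>J. \<forall>x\<in>carrier (F i). B.coproj j (\<psi> (A.emb i x)) = \<one>\<^bsub>B.P\<^esub>"
proof -
  interpret GP: group A.P by (rule A.group_P)
  interpret GQ: group B.P by (rule B.group_P)
  interpret Fi: group "F i" using A.grp[OF i] .
  define \<psi>' where "\<psi>' = inv_into (carrier A.P) \<psi>"
  have psi': "\<psi>' \<in> iso B.P A.P" unfolding \<psi>'_def by (rule GP.iso_set_sym[OF psi])
  have psih: "\<psi> \<in> hom A.P B.P" and psib: "bij_betw \<psi> (carrier A.P) (carrier B.P)" using psi by (auto simp: iso_def)
  have psi'h: "\<psi>' \<in> hom B.P A.P" using psi' by (auto simp: iso_def)
  have psiinj: "inj_on \<psi> (carrier A.P)" using psib by (auto simp: bij_betw_def)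
  have psi'psi: "\<psi>' (\<psi> p) = p" if "p \<in> carrier A.P" for p
    unfolding \<psi>'_def using psiinj that by (rule inv_into_f_f)
  have psipsi': "\<psi> (\<psi>' q) = q" if "q \<in> carrier B.P" for q
    unfolding \<psi>'_def using psib that by (metis bij_betw_def f_inv_into_f)
  define g where "g x = \<psi> (A.emb i x)" for x
  have gh: "g \<in> hom (F i) B.P"
  proof -
    have "\<psi> \<circ> A.emb i \<in> hom (F i) B.P" by (rule hom_compose[OF A.emb_hom[OF i] psih])
    then show ?thesis by (simp add: g_def[abs_def] comp_def)
  qed
  have gC: "g x \<in> carrier B.P" if "x \<in> carrier (F i)" for x using hom_in_carrier[OF gh that] .
  have ginj: "x = y" if "x \<in> carrier (F i)" "y \<in> carrier (F i)" "g x = g y" for x y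
  proof -
    have "A.emb i x = A.emb i y"
      using that psiinj A.emb_carrier[OF i] by (auto simp: g_def inj_on_def)
    then show ?thesis using A.emb_inj[OF i] that by (auto simp: inj_on_def)
  qed
  have g1: "g \<one>\<^bsub>F i\<^esub> = \<one>\<^bsub>B.P\<^esub>" by (rule hom_one'[OF Fi.group_axioms GQ.group_axioms gh])
  have K: "\<psi>' b = A.emb i (\<psi>' b i)"
    if b: "b \<in> carrier B.P" and bc: "\<forall>y\<in>carrier A.P. y i = \<one>\<^bsub>F i\<^esub> \<longrightarrow> b \<otimes>\<^bsub>B.P\<^esub> \<psi> y = \<psi> y \<otimes>\<^bsub>B.P\<^esub> b" for b
  proof (rule A.center_supp[OF Z i])
    show zC: "\<psi>' b \<in> carrier A.P" using hom_in_carrier[OF psi'h b] .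
    show "\<forall>y\<in>carrier A.P. y i = \<one>\<^bsub>F i\<^esub> \<longrightarrow> \<psi>' b \<otimes>\<^bsub>A.P\<^esub> y = y \<otimes>\<^bsub>A.P\<^esub> \<psi>' b"
    proof (intro ballI impI)
      fix y assume y: "y \<in> carrier A.P" "y i = \<one>\<^bsub>F i\<^esub>"
      have "\<psi> (\<psi>' b \<otimes>\<^bsub>A.P\<^esub> y) = \<psi> (y \<otimes>\<^bsub>A.P\<^esub> \<psi>' b)"
        using hom_mult[OF psih zC y(1)] hom_mult[OF psih y(1) zC] psipsi'[OF b] bc y by simp
      then show "\<psi>' b \<otimes>\<^bsub>A.P\<^esub> y = y \<otimes>\<^bsub>A.P\<^esub> \<psi>' b"
        using psiinj zC y(1) by (meson GP.m_closed inj_onD)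
    qed
  qed
  have gcomm: "g x \<otimes>\<^bsub>B.P\<^esub> \<psi> y = \<psi> y \<otimes>\<^bsub>B.P\<^esub> g x"
    if x: "x \<in> carrier (F i)" and y: "y \<in> carrier A.P" "y i = \<one>\<^bsub>F i\<^esub>" for x y
  proof -
    have "A.emb i x \<otimes>\<^bsub>A.P\<^esub> y = y \<otimes>\<^bsub>A.P\<^esub> A.emb i x" by (rule A.emb_comm[OF i x y])
    then show ?thesis
      using hom_mult[OF psih A.emb_carrier[OF i x] y(1)] hom_mult[OF psih y(1) A.emb_carrier[OF i x]]
      by (simp add: g_def)
  qed
  obtain x0 where x0: "x0 \<in> carrier (F i)" "x0 \<noteq> \<one>\<^bsub>F i\<^esub>"
    using ind Fi.one_closed unfolding indecomposable_group_def by blast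
  have "g x0 \<noteq> \<one>\<^bsub>B.P\<^esub>" using ginj[OF x0(1) Fi.one_closed] g1 x0(2) by auto
  then obtain j where j: "j \<in> J" and gx0j: "g x0 j \<noteq> \<one>\<^bsub>F' j\<^esub>"
    using B.P_one_iff[OF gC[OF x0(1)]] by blast
  define h1 where "h1 x = \<psi>' (B.emb j (g x j)) i" for x
  define h2 where "h2 x = \<psi>' (B.coproj j (g x)) i" for x
  have h1h: "h1 \<in> hom (F i) (F i)"
  proof -
    have c1: "(\<lambda>q. B.emb j (q j)) \<circ> g \<in> hom (F i) B.P" by (rule hom_compose[OF gh B.proj_hom[OF j]])
    have c2: "\<psi>' \<circ> ((\<lambda>q. B.emb j (q j)) \<circ> g) \<in> hom (F i) A.P" by (rule hom_compose[OF c1 psi'h])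
    have "(\<lambda>p. p i) \<circ> (\<psi>' \<circ> ((\<lambda>q. B.emb j (q j)) \<circ> g)) \<in> hom (F i) (F i)" by (rule hom_compose[OF c2 A.eval_hom[OF i]])
    then show ?thesis by (simp add: h1_def[abs_def] comp_def)
  qed
  have h2h: "h2 \<in> hom (F i) (F i)"
  proof -
    have c1: "B.coproj j \<circ> g \<in> hom (F i) B.P" by (rule hom_compose[OF gh B.coproj_hom])
    have c2: "\<psi>' \<circ> (B.coproj j \<circ> g) \<in> hom (F i) A.P" by (rule hom_compose[OF c1 psi'h])
    have "(\<lambda>p. p i) \<circ> (\<psi>' \<circ> (B.coproj j \<circ> g)) \<in> hom (F i) (F i)" by (rule hom_compose[OF c2 A.eval_hom[OF i]])
    then show ?thesis by (simp add: h2_def[abs_def] comp_def)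
  qed
  have gh1: "g (h1 x) = B.emb j (g x j)" if x: "x \<in> carrier (F i)" for x
  proof -
    have bC: "B.emb j (g x j) \<in> carrier B.P" using B.emb_carrier[OF j B.P_comp[OF gC[OF x] j]] .
    have "\<psi>' (B.emb j (g x j)) = A.emb i (h1 x)" unfolding h1_def
    proof (rule K[OF bC], intro ballI impI)
      fix y assume y: "y \<in> carrier A.P" "y i = \<one>\<^bsub>F i\<^esub>"
      show "B.emb j (g x j) \<otimes>\<^bsub>B.P\<^esub> \<psi> y = \<psi> y \<otimes>\<^bsub>B.P\<^esub> B.emb j (g x j)"
        by (rule B.comm_proj[OF gC[OF x] hom_in_carrier[OF psih y(1)] j gcomm[OF x y]])
    qed
    then show ?thesis using psipsi'[OF bC] by (simp add: g_def)
  qed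
  have gh2: "g (h2 x) = B.coproj j (g x)" if x: "x \<in> carrier (F i)" for x
  proof -
    have bC: "B.coproj j (g x) \<in> carrier B.P" using B.coproj_carrier[OF gC[OF x]] .
    have "\<psi>' (B.coproj j (g x)) = A.emb i (h2 x)" unfolding h2_def
    proof (rule K[OF bC], intro ballI impI)
      fix y assume y: "y \<in> carrier A.P" "y i = \<one>\<^bsub>F i\<^esub>"
      show "B.coproj j (g x) \<otimes>\<^bsub>B.P\<^esub> \<psi> y = \<psi> y \<otimes>\<^bsub>B.P\<^esub> B.coproj j (g x)"
        by (rule B.comm_coproj[OF gC[OF x] hom_in_carrier[OF psih y(1)] gcomm[OF x y]])
    qed
    then show ?thesis using psipsi'[OF bC] by (simp add: g_def)
  qed
  have h1C: "h1 x \<in> carrier (F i)" if "x \<in> carrier (F i)" for x using hom_in_carrier[OF h1h that] .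
  have h2C: "h2 x \<in> carrier (F i)" if "x \<in> carrier (F i)" for x using hom_in_carrier[OF h2h that] .
  have dec: "h1 x \<otimes>\<^bsub>F i\<^esub> h2 x = x" if x: "x \<in> carrier (F i)" for x
  proof (rule ginj[OF Fi.m_closed[OF h1C[OF x] h2C[OF x]] x])
    show "g (h1 x \<otimes>\<^bsub>F i\<^esub> h2 x) = g x"
      using hom_mult[OF gh h1C[OF x] h2C[OF x]] gh1[OF x] gh2[OF x] B.proj_coproj[OF gC[OF x] j]
      by simp
  qed
  define X where "X = kernel (F i) B.P (\<lambda>x. B.coproj j (g x))"
  define Y where "Y = kernel (F i) B.P (\<lambda>x. B.emb j (g x j))"
  have hX: "(\<lambda>x. B.coproj j (g x)) \<in> hom (F i) B.P"
    using hom_compose[OF gh B.coproj_hom] by (simp add: comp_def)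
  have hY: "(\<lambda>x. B.emb j (g x j)) \<in> hom (F i) B.P"
    using hom_compose[OF gh B.proj_hom[OF j]] by (simp add: comp_def)
  have sX: "subgroup X (F i)" unfolding X_def
    by (rule group_hom.subgroup_kernel) (simp add: group_hom_def group_hom_axioms_def hX Fi.group_axioms GQ.group_axioms)
  have sY: "subgroup Y (F i)" unfolding Y_def
    by (rule group_hom.subgroup_kernel) (simp add: group_hom_def group_hom_axioms_def hY Fi.group_axioms GQ.group_axioms)
  have h1X: "h1 x \<in> X" if x: "x \<in> carrier (F i)" for x
    using h1C[OF x] gh1[OF x] B.coproj_emb[OF j] by (simp add: X_def kernel_def)
  have h2Y: "h2 x \<in> Y" if x: "x \<in> carrier (F i)" for x
    using h2C[OF x] gh2[OF x] B.emb_coproj[OF j] by (simp add: Y_def kernel_def)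
  have Xh2: "h2 a = \<one>\<^bsub>F i\<^esub>" if a: "a \<in> X" for a
  proof -
    have aC: "a \<in> carrier (F i)" using a by (simp add: X_def kernel_def)
    have "g (h2 a) = g \<one>\<^bsub>F i\<^esub>" using gh2[OF aC] a g1 by (simp add: X_def kernel_def)
    then show ?thesis using ginj[OF h2C[OF aC] Fi.one_closed] by simp
  qed
  have Yh1: "h1 b = \<one>\<^bsub>F i\<^esub>" if b: "b \<in> Y" for b
  proof -
    have bC: "b \<in> carrier (F i)" using b by (simp add: Y_def kernel_def)
    have "g (h1 b) = g \<one>\<^bsub>F i\<^esub>" using gh1[OF bC] b g1 by (simp add: Y_def kernel_def)
    then show ?thesis using ginj[OF h1C[OF bC] Fi.one_closed] by simp
  qed
  have Xh1: "h1 a = a" if a: "a \<in> X" for a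
  proof -
    have aC: "a \<in> carrier (F i)" using a by (simp add: X_def kernel_def)
    show ?thesis using dec[OF aC] Xh2[OF a] h1C[OF aC] by simp
  qed
  have Yh2: "h2 b = b" if b: "b \<in> Y" for b
  proof -
    have bC: "b \<in> carrier (F i)" using b by (simp add: Y_def kernel_def)
    show ?thesis using dec[OF bC] Yh1[OF b] h2C[OF bC] by simp
  qed
  define X' where "X' = (F i)\<lparr>carrier := X\<rparr>"
  define Y' where "Y' = (F i)\<lparr>carrier := Y\<rparr>"
  have gX': "group X'" unfolding X'_def by (rule subgroup.subgroup_is_group[OF sX Fi.group_axioms])
  have gY': "group Y'" unfolding Y'_def by (rule subgroup.subgroup_is_group[OF sY Fi.group_axioms])
  have XC: "X \<subseteq> carrier (F i)" using sX by (rule subgroup.subset)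
  have YC: "Y \<subseteq> carrier (F i)" using sY by (rule subgroup.subset)
  have "(\<lambda>x. (h1 x, h2 x)) \<in> iso (F i) (X' \<times>\<times> Y')"
  proof (rule isoI)
    show "(\<lambda>x. (h1 x, h2 x)) \<in> hom (F i) (X' \<times>\<times> Y')"
    proof (rule homI)
      fix x assume x: "x \<in> carrier (F i)"
      show "(h1 x, h2 x) \<in> carrier (X' \<times>\<times> Y')" using h1X[OF x] h2Y[OF x] by (simp add: X'_def Y'_def)
    next
      fix x y assume x: "x \<in> carrier (F i)" and y: "y \<in> carrier (F i)"
      show "(h1 (x \<otimes>\<^bsub>F i\<^esub> y), h2 (x \<otimes>\<^bsub>F i\<^esub> y)) = (h1 x, h2 x) \<otimes>\<^bsub>X' \<times>\<times> Y'\<^esub> (h1 y, h2 y)"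
        using hom_mult[OF h1h x y] hom_mult[OF h2h x y] by (simp add: X'_def Y'_def)
    qed
    show "bij_betw (\<lambda>x. (h1 x, h2 x)) (carrier (F i)) (carrier (X' \<times>\<times> Y'))"
    proof (rule bij_betw_imageI)
      show "inj_on (\<lambda>x. (h1 x, h2 x)) (carrier (F i))"
        by (rule inj_onI) (metis dec prod.inject)
      show "(\<lambda>x. (h1 x, h2 x)) ` carrier (F i) = carrier (X' \<times>\<times> Y')"
      proof
        show "(\<lambda>x. (h1 x, h2 x)) ` carrier (F i) \<subseteq> carrier (X' \<times>\<times> Y')"
          using h1X h2Y by (auto simp: X'_def Y'_def)
        show "carrier (X' \<times>\<times> Y') \<subseteq> (\<lambda>x. (h1 x, h2 x)) ` carrier (F i)"
        proof
          fix p assume "p \<in> carrier (X' \<times>\<times> Y')"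
          then obtain a b where p: "p = (a, b)" "a \<in> X" "b \<in> Y" by (auto simp: X'_def Y'_def)
          have aC: "a \<in> carrier (F i)" and bC: "b \<in> carrier (F i)" using p XC YC by auto
          have "h1 (a \<otimes>\<^bsub>F i\<^esub> b) = a" using hom_mult[OF h1h aC bC] Xh1[OF p(2)] Yh1[OF p(3)] aC by simp
          moreover have "h2 (a \<otimes>\<^bsub>F i\<^esub> b) = b" using hom_mult[OF h2h aC bC] Xh2[OF p(2)] Yh2[OF p(3)] bC by simp
          ultimately have "p = (\<lambda>x. (h1 x, h2 x)) (a \<otimes>\<^bsub>F i\<^esub> b)" using p(1) by simp
          then show "p \<in> (\<lambda>x. (h1 x, h2 x)) ` carrier (F i)"
            using Fi.m_closed[OF aC bC] by (rule image_eqI)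
        qed
      qed
    qed
  qed
  then have "F i \<cong> X' \<times>\<times> Y'" by (rule is_isoI)
  then have "carrier X' = {\<one>\<^bsub>X'\<^esub>} \<or> carrier Y' = {\<one>\<^bsub>Y'\<^esub>}"
    using ind gX' gY' unfolding indecomposable_group_def by blast
  then have XY: "X = {\<one>\<^bsub>F i\<^esub>} \<or> Y = {\<one>\<^bsub>F i\<^esub>}"
    by (simp add: X'_def Y'_def)
  have "h1 x0 \<noteq> \<one>\<^bsub>F i\<^esub>"
  proof
    assume "h1 x0 = \<one>\<^bsub>F i\<^esub>"
    then have "B.emb j (g x0 j) = \<one>\<^bsub>B.P\<^esub>" using gh1[OF x0(1)] g1 by simp
    then have "B.emb j (g x0 j) j = \<one>\<^bsub>B.P\<^esub> j" by simp
    then show False using gx0j j by (simp add: B.emb_apply)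
  qed
  then have "X \<noteq> {\<one>\<^bsub>F i\<^esub>}" using h1X[OF x0(1)] by auto
  then have Y1: "Y = {\<one>\<^bsub>F i\<^esub>}" using XY by blast
  have "\<forall>x\<in>carrier (F i). B.coproj j (g x) = \<one>\<^bsub>B.P\<^esub>"
  proof
    fix x assume x: "x \<in> carrier (F i)"
    have "h2 x = \<one>\<^bsub>F i\<^esub>" using h2Y[OF x] Y1 by simp
    then show "B.coproj j (g x) = \<one>\<^bsub>B.P\<^esub>" using gh2[OF x] g1 by simp
  qed
  then show ?thesis using j by (auto simp: g_def)
qed

end

lemma U2:
  fixes F :: "'i \<Rightarrow> 'g monoid" and F' :: "'j \<Rightarrow> 'g monoid"
  assumes indF: "\<forall>i\<in>I. indecomposable_group (F i)" and indF': "\<forall>j\<in>J. indecomposable_group (F' j)"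
    and psi: "\<psi> \<in> iso (sum_group I F) (sum_group J F')"
    and ZP: "group_center (sum_group I F) = {\<one>\<^bsub>sum_group I F\<^esub>}"
    and ZQ: "group_center (sum_group J F') = {\<one>\<^bsub>sum_group J F'\<^esub>}"
  shows "\<exists>\<sigma>. bij_betw \<sigma> I J \<and> (\<forall>i\<in>I. F i \<cong> F' (\<sigma> i))"
proof -
  interpret A: sgrp I F unfolding sgrp_def using indF by (simp add: indecomposable_group_def)
  interpret B: sgrp J F' unfolding sgrp_def using indF' by (simp add: indecomposable_group_def)
  interpret AB: sgrp2 I F J F' by (simp add: sgrp2_def A.sgrp_axioms B.sgrp_axioms)
  interpret BA: sgrp2 J F' I F by (simp add: sgrp2_def A.sgrp_axioms B.sgrp_axioms)
  interpret GP: group A.P by (rule A.group_P)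
  interpret GQ: group B.P by (rule B.group_P)
  define \<psi>' where "\<psi>' = inv_into (carrier A.P) \<psi>"
  have psi': "\<psi>' \<in> iso B.P A.P" unfolding \<psi>'_def by (rule GP.iso_set_sym[OF psi])
  have psih: "\<psi> \<in> hom A.P B.P" and psib: "bij_betw \<psi> (carrier A.P) (carrier B.P)" using psi by (auto simp: iso_def)
  have psi'h: "\<psi>' \<in> hom B.P A.P" using psi' by (auto simp: iso_def)
  have psiinj: "inj_on \<psi> (carrier A.P)" using psib by (auto simp: bij_betw_def)
  have psi'psi: "\<psi>' (\<psi> p) = p" if "p \<in> carrier A.P" for p
    unfolding \<psi>'_def using psiinj that by (rule inv_into_f_f)
  have psipsi': "\<psi> (\<psi>' q) = q" if "q \<in> carrier B.P" for q
    unfolding \<psi>'_def using psib that by (metis bij_betw_def f_inv_into_f)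
  have ntF: "\<exists>x\<in>carrier (F i). x \<noteq> \<one>\<^bsub>F i\<^esub>" if "i \<in> I" for i
    using indF that group.is_monoid monoid.one_closed unfolding indecomposable_group_def by blast
  have ntF': "\<exists>x\<in>carrier (F' j). x \<noteq> \<one>\<^bsub>F' j\<^esub>" if "j \<in> J" for j
    using indF' that group.is_monoid monoid.one_closed unfolding indecomposable_group_def by blast
  define S where "S i j \<longleftrightarrow> (\<forall>x\<in>carrier (F i). \<psi> (A.emb i x) = B.emb j (\<psi> (A.emb i x) j))" for i j
  define S' where "S' j k \<longleftrightarrow> (\<forall>y\<in>carrier (F' j). \<psi>' (B.emb j y) = A.emb k (\<psi>' (B.emb j y) k))" for j k
  have exS: "\<exists>j\<in>J. S i j" if i: "i \<in> I" for i
  proof -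
    obtain j where j: "j \<in> J" and c: "\<forall>x\<in>carrier (F i). B.coproj j (\<psi> (A.emb i x)) = \<one>\<^bsub>B.P\<^esub>"
      using AB.U1[OF psi ZP i] indF i by blast
    have "S i j" unfolding S_def
    proof
      fix x assume x: "x \<in> carrier (F i)"
      have q: "\<psi> (A.emb i x) \<in> carrier B.P" using hom_in_carrier[OF psih A.emb_carrier[OF i x]] .
      have "\<psi> (A.emb i x) = B.emb j (\<psi> (A.emb i x) j) \<otimes>\<^bsub>B.P\<^esub> B.coproj j (\<psi> (A.emb i x))"
        using B.proj_coproj[OF q j] by simp
      also have "\<dots> = B.emb j (\<psi> (A.emb i x) j)"
      proof -
        have c1: "B.coproj j (\<psi> (A.emb i x)) = \<one>\<^bsub>B.P\<^esub>" using c x by blast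
        show ?thesis unfolding c1 by (rule GQ.r_one[OF B.emb_carrier[OF j B.P_comp[OF q j]]])
      qed
      finally show "\<psi> (A.emb i x) = B.emb j (\<psi> (A.emb i x) j)" .
    qed
    then show ?thesis using j by blast
  qed
  have exS': "\<exists>k\<in>I. S' j k" if j: "j \<in> J" for j
  proof -
    obtain k where k: "k \<in> I" and c: "\<forall>y\<in>carrier (F' j). A.coproj k (\<psi>' (B.emb j y)) = \<one>\<^bsub>A.P\<^esub>"
      using BA.U1[OF psi' ZQ j] indF' j by blast
    have "S' j k" unfolding S'_def
    proof
      fix y assume y: "y \<in> carrier (F' j)"
      have q: "\<psi>' (B.emb j y) \<in> carrier A.P" using hom_in_carrier[OF psi'h B.emb_carrier[OF j y]] .
      have "\<psi>' (B.emb j y) = A.emb k (\<psi>' (B.emb j y) k) \<otimes>\<^bsub>A.P\<^esub> A.coproj k (\<psi>' (B.emb j y))"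
        using A.proj_coproj[OF q k] by simp
      also have "\<dots> = A.emb k (\<psi>' (B.emb j y) k)"
      proof -
        have c1: "A.coproj k (\<psi>' (B.emb j y)) = \<one>\<^bsub>A.P\<^esub>" using c y by blast
        show ?thesis unfolding c1 by (rule GP.r_one[OF A.emb_carrier[OF k A.P_comp[OF q k]]])
      qed
      finally show "\<psi>' (B.emb j y) = A.emb k (\<psi>' (B.emb j y) k)" .
    qed
    then show ?thesis using k by blast
  qed
  have B1: "k = i" if i: "i \<in> I" and j: "j \<in> J" and k: "k \<in> I" and Sij: "S i j" and S'jk: "S' j k" for i j k
  proof -
    obtain x0 where x0: "x0 \<in> carrier (F i)" "x0 \<noteq> \<one>\<^bsub>F i\<^esub>" using ntF[OF i] by blast
    let ?q = "\<psi> (A.emb i x0)"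
    have q: "?q \<in> carrier B.P" using hom_in_carrier[OF psih A.emb_carrier[OF i x0(1)]] .
    have qe: "?q = B.emb j (?q j)" using Sij x0 by (simp add: S_def)
    have "\<psi>' (B.emb j (?q j)) = A.emb i x0" using qe psi'psi[OF A.emb_carrier[OF i x0(1)]] by simp
    moreover have "\<psi>' (B.emb j (?q j)) = A.emb k (\<psi>' (B.emb j (?q j)) k)"
      using S'jk B.P_comp[OF q j] by (simp add: S'_def)
    ultimately have "A.emb i x0 = A.emb k (\<psi>' (B.emb j (?q j)) k)" by simp
    then have "i = k" by (rule A.emb_eq_idx[OF i k _ x0(2)])
    then show "k = i" by simp
  qed
  have B2: "j'' = j" if j: "j \<in> J" and k: "k \<in> I" and j'': "j'' \<in> J" and S'jk: "S' j k" and Skj: "S k j''" for j k j''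
  proof -
    obtain y0 where y0: "y0 \<in> carrier (F' j)" "y0 \<noteq> \<one>\<^bsub>F' j\<^esub>" using ntF'[OF j] by blast
    let ?r = "\<psi>' (B.emb j y0)"
    have r: "?r \<in> carrier A.P" using hom_in_carrier[OF psi'h B.emb_carrier[OF j y0(1)]] .
    have re: "?r = A.emb k (?r k)" using S'jk y0 by (simp add: S'_def)
    have "\<psi> (A.emb k (?r k)) = B.emb j y0" using re psipsi'[OF B.emb_carrier[OF j y0(1)]] by simp
    moreover have "\<psi> (A.emb k (?r k)) = B.emb j'' (\<psi> (A.emb k (?r k)) j'')"
      using Skj A.P_comp[OF r k] by (simp add: S_def)
    ultimately have "B.emb j y0 = B.emb j'' (\<psi> (A.emb k (?r k)) j'')" by simp
    then have "j = j''" by (rule B.emb_eq_idx[OF j j'' _ y0(2)])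
    then show "j'' = j" by simp
  qed
  define \<sigma> where "\<sigma> i = (SOME j. j \<in> J \<and> S i j)" for i
  define \<tau> where "\<tau> j = (SOME k. k \<in> I \<and> S' j k)" for j
  have \<sigma>: "\<sigma> i \<in> J \<and> S i (\<sigma> i)" if "i \<in> I" for i
    unfolding \<sigma>_def using exS[OF that] by (metis (no_types, lifting) someI_ex)
  have \<tau>: "\<tau> j \<in> I \<and> S' j (\<tau> j)" if "j \<in> J" for j
    unfolding \<tau>_def using exS'[OF that] by (metis (no_types, lifting) someI_ex)
  have \<tau>\<sigma>: "\<tau> (\<sigma> i) = i" if i: "i \<in> I" for i
    using B1[OF i conjunct1[OF \<sigma>[OF i]] conjunct1[OF \<tau>[OF conjunct1[OF \<sigma>[OF i]]]]] \<sigma>[OF i] \<tau>[OF conjunct1[OF \<sigma>[OF i]]]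
    by blast
  have \<sigma>\<tau>: "\<sigma> (\<tau> j) = j" if j: "j \<in> J" for j
    using B2[OF j conjunct1[OF \<tau>[OF j]] conjunct1[OF \<sigma>[OF conjunct1[OF \<tau>[OF j]]]]] \<tau>[OF j] \<sigma>[OF conjunct1[OF \<tau>[OF j]]]
    by blast
  have bij: "bij_betw \<sigma> I J"
    by (rule bij_betw_byWitness[where f' = \<tau>]) (use \<tau>\<sigma> \<sigma>\<tau> \<sigma> \<tau> in auto)
  have isos: "F i \<cong> F' (\<sigma> i)" if i: "i \<in> I" for i
  proof -
    define j where "j = \<sigma> i"
    have j: "j \<in> J" and Sij: "S i j" using \<sigma>[OF i] by (auto simp: j_def)
    have tj: "\<tau> j = i" using \<tau>\<sigma>[OF i] by (simp add: j_def)
    define f where "f x = \<psi> (A.emb i x) j" for x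
    have fh: "f \<in> hom (F i) (F' j)"
    proof -
      have c1: "\<psi> \<circ> A.emb i \<in> hom (F i) B.P" by (rule hom_compose[OF A.emb_hom[OF i] psih])
      have "(\<lambda>q. q j) \<circ> (\<psi> \<circ> A.emb i) \<in> hom (F i) (F' j)" by (rule hom_compose[OF c1 B.eval_hom[OF j]])
      then show ?thesis by (simp add: f_def[abs_def] comp_def)
    qed
    have "f \<in> iso (F i) (F' j)"
    proof (rule isoI[OF fh], rule bij_betw_imageI)
      show "inj_on f (carrier (F i))"
      proof (rule inj_onI)
        fix x x' assume x: "x \<in> carrier (F i)" and x': "x' \<in> carrier (F i)" and e: "f x = f x'"
        have e1: "\<psi> (A.emb i x) = B.emb j (\<psi> (A.emb i x) j)" using Sij x by (simp add: S_def)
        have e2: "\<psi> (A.emb i x') = B.emb j (\<psi> (A.emb i x') j)" using Sij x' by (simp add: S_def)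
        have "\<psi> (A.emb i x) = \<psi> (A.emb i x')" using e e1 e2 unfolding f_def by metis
        then have "A.emb i x = A.emb i x'" using psiinj A.emb_carrier[OF i] x x' by (auto simp: inj_on_def)
        then show "x = x'" using A.emb_inj[OF i] x x' by (auto simp: inj_on_def)
      qed
      show "f ` carrier (F i) = carrier (F' j)"
      proof
        show "f ` carrier (F i) \<subseteq> carrier (F' j)" using hom_in_carrier[OF fh] by blast
        show "carrier (F' j) \<subseteq> f ` carrier (F i)"
        proof
          fix y assume y: "y \<in> carrier (F' j)"
          let ?r = "\<psi>' (B.emb j y)"
          have r: "?r \<in> carrier A.P" using hom_in_carrier[OF psi'h B.emb_carrier[OF j y]] .
          have re: "?r = A.emb i (?r i)" using \<tau>[OF j] tj y by (simp add: S'_def)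
          have "f (?r i) = \<psi> ?r j" using re by (simp add: f_def)
          also have "\<dots> = y" using psipsi'[OF B.emb_carrier[OF j y]] j by (simp add: B.emb_apply)
          finally show "y \<in> f ` carrier (F i)" using A.P_comp[OF r i] by (metis image_eqI)
        qed
      qed
    qed
    then show ?thesis unfolding j_def by (rule is_isoI)
  qed
  show ?thesis using bij isos by blast
qed

lemma E2:
  fixes G :: "('a, 'b) monoid_scheme" and F :: "'i \<Rightarrow> ('g, 'c) monoid_scheme"
    and \<phi> :: "'a \<Rightarrow> 'k::field mat"
  assumes G: "group G" and phih: "\<phi> \<in> hom G (GL_group d TYPE('k))" and phii: "inj_on \<phi> (carrier G)"
    and Z: "group_center G = {\<one>\<^bsub>G\<^esub>}"
    and FI: "\<forall>i\<in>I. group (F i) \<and> carrier (F i) \<noteq> {\<one>\<^bsub>F i\<^esub>}"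
    and iso: "G \<cong> sum_group I F"
  shows "finite I \<and> card I \<le> d * d"
proof -
  interpret A: sgrp I F using FI by (simp add: sgrp_def)
  interpret GG: group G by (rule G)
  interpret GP: group A.P by (rule A.group_P)
  obtain h where h: "h \<in> iso G A.P" using iso by (auto simp: is_iso_def)
  define h' where "h' = inv_into (carrier G) h"
  have h': "h' \<in> iso A.P G" unfolding h'_def by (rule GG.iso_set_sym[OF h])
  have ZP: "group_center A.P = {\<one>\<^bsub>A.P\<^esub>}" by (rule center_iso[OF G A.group_P h Z])
  have h'h: "h' \<in> hom A.P G" and h'inj: "inj_on h' (carrier A.P)" using h' by (auto simp: iso_def bij_betw_def)
  define \<rho> where "\<rho> x = \<phi> (h' x)" for x
  have \<rho>C: "\<rho> x \<in> carrier_mat d d" if "x \<in> carrier A.P" for x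
    using hom_in_carrier[OF phih hom_in_carrier[OF h'h that]] by (simp add: \<rho>_def GL_group_def)
  have \<rho>m: "\<rho> (x \<otimes>\<^bsub>A.P\<^esub> y) = \<rho> x * \<rho> y" if "x \<in> carrier A.P" "y \<in> carrier A.P" for x y
    using hom_mult[OF h'h that] hom_mult[OF phih hom_in_carrier[OF h'h that(1)] hom_in_carrier[OF h'h that(2)]]
    by (simp add: \<rho>_def GL_group_def)
  have \<rho>i: "x = y" if "x \<in> carrier A.P" "y \<in> carrier A.P" "\<rho> x = \<rho> y" for x y
    using that phii h'inj hom_in_carrier[OF h'h] unfolding \<rho>_def inj_on_def by metis
  have nc: "\<exists>y\<in>carrier (F i). \<exists>x\<in>carrier (F i). y \<otimes>\<^bsub>F i\<^esub> x \<noteq> x \<otimes>\<^bsub>F i\<^esub> y" if i: "i \<in> I" for i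
  proof -
    obtain y where y: "y \<in> carrier (F i)" "y \<noteq> \<one>\<^bsub>F i\<^esub>"
      using FI i group.is_monoid monoid.one_closed by blast
    show ?thesis using A.center_comp[OF ZP i y(1)] y by blast
  qed
  define Y where "Y i = (SOME y. y \<in> carrier (F i) \<and> (\<exists>x\<in>carrier (F i). y \<otimes>\<^bsub>F i\<^esub> x \<noteq> x \<otimes>\<^bsub>F i\<^esub> y))" for i
  have Y: "Y i \<in> carrier (F i) \<and> (\<exists>x\<in>carrier (F i). Y i \<otimes>\<^bsub>F i\<^esub> x \<noteq> x \<otimes>\<^bsub>F i\<^esub> Y i)" if "i \<in> I" for i
  proof -
    have "\<exists>y. y \<in> carrier (F i) \<and> (\<exists>x\<in>carrier (F i). y \<otimes>\<^bsub>F i\<^esub> x \<noteq> x \<otimes>\<^bsub>F i\<^esub> y)"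
      using nc[OF that] by blast
    then show ?thesis unfolding Y_def by (rule someI_ex)
  qed
  define X where "X i = (SOME x. x \<in> carrier (F i) \<and> Y i \<otimes>\<^bsub>F i\<^esub> x \<noteq> x \<otimes>\<^bsub>F i\<^esub> Y i)" for i
  have X: "X i \<in> carrier (F i) \<and> Y i \<otimes>\<^bsub>F i\<^esub> X i \<noteq> X i \<otimes>\<^bsub>F i\<^esub> Y i" if "i \<in> I" for i
    unfolding X_def using Y[OF that] by (metis (mono_tags, lifting) someI_ex)
  have bound: "card J \<le> d * d" if J: "finite J" "J \<subseteq> I" for J
  proof (rule LA_bound[OF J(1), where M = "\<lambda>i. \<rho> (A.emb i (Y i))" and N = "\<lambda>i. \<rho> (A.emb i (X i))"])
    have eY: "A.emb i (Y i) \<in> carrier A.P" if "i \<in> I" for i using A.emb_carrier[OF that] Y[OF that] by blast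
    have eX: "A.emb i (X i) \<in> carrier A.P" if "i \<in> I" for i using A.emb_carrier[OF that] X[OF that] by blast
    show "\<forall>i\<in>J. \<rho> (A.emb i (Y i)) \<in> carrier_mat d d" using J eY \<rho>C by blast
    show "\<forall>i\<in>J. \<rho> (A.emb i (X i)) \<in> carrier_mat d d" using J eX \<rho>C by blast
    show "\<forall>i\<in>J. \<forall>k\<in>J. i \<noteq> k \<longrightarrow> \<rho> (A.emb i (Y i)) * \<rho> (A.emb k (X k)) = \<rho> (A.emb k (X k)) * \<rho> (A.emb i (Y i))"
    proof (intro ballI impI)
      fix i k assume ik: "i \<in> J" "k \<in> J" "i \<noteq> k"
      then have ik': "i \<in> I" "k \<in> I" using J by auto
      have "A.emb k (X k) i = \<one>\<^bsub>F i\<^esub>" using ik ik' by (simp add: A.emb_apply)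
      then have "A.emb i (Y i) \<otimes>\<^bsub>A.P\<^esub> A.emb k (X k) = A.emb k (X k) \<otimes>\<^bsub>A.P\<^esub> A.emb i (Y i)"
        using A.emb_comm[OF ik'(1) conjunct1[OF Y[OF ik'(1)]] eX[OF ik'(2)]] by blast
      then show "\<rho> (A.emb i (Y i)) * \<rho> (A.emb k (X k)) = \<rho> (A.emb k (X k)) * \<rho> (A.emb i (Y i))"
        using \<rho>m[OF eY[OF ik'(1)] eX[OF ik'(2)]] \<rho>m[OF eX[OF ik'(2)] eY[OF ik'(1)]] by simp
    qed
    show "\<forall>i\<in>J. \<rho> (A.emb i (Y i)) * \<rho> (A.emb i (X i)) \<noteq> \<rho> (A.emb i (X i)) * \<rho> (A.emb i (Y i))"
    proof (intro ballI notI)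
      fix i assume iJ: "i \<in> J" and e: "\<rho> (A.emb i (Y i)) * \<rho> (A.emb i (X i)) = \<rho> (A.emb i (X i)) * \<rho> (A.emb i (Y i))"
      then have i: "i \<in> I" using J by auto
      have yC: "Y i \<in> carrier (F i)" and xC: "X i \<in> carrier (F i)" using X[OF i] Y[OF i] by auto
      have "\<rho> (A.emb i (Y i) \<otimes>\<^bsub>A.P\<^esub> A.emb i (X i)) = \<rho> (A.emb i (X i) \<otimes>\<^bsub>A.P\<^esub> A.emb i (Y i))"
        using e \<rho>m[OF eY[OF i] eX[OF i]] \<rho>m[OF eX[OF i] eY[OF i]] by simp
      then have "A.emb i (Y i) \<otimes>\<^bsub>A.P\<^esub> A.emb i (X i) = A.emb i (X i) \<otimes>\<^bsub>A.P\<^esub> A.emb i (Y i)"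
        using \<rho>i GP.m_closed eY[OF i] eX[OF i] by blast
      then have "A.emb i (Y i \<otimes>\<^bsub>F i\<^esub> X i) = A.emb i (X i \<otimes>\<^bsub>F i\<^esub> Y i)"
        using hom_mult[OF A.emb_hom[OF i] yC xC] hom_mult[OF A.emb_hom[OF i] xC yC] by simp
      then have "A.emb i (Y i \<otimes>\<^bsub>F i\<^esub> X i) i = A.emb i (X i \<otimes>\<^bsub>F i\<^esub> Y i) i" by simp
      then show False using X[OF i] i by (simp add: A.emb_apply)
    qed
  qed
  have fin: "finite I"
  proof (rule ccontr)
    assume "infinite I"
    then obtain J where "J \<subseteq> I" "finite J" "card J = d * d + 1" using infinite_arbitrarily_large by blast
    then show False using bound by fastforce
  qed
  show ?thesis using fin bound[OF fin] by simp
qed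

lemma DirProd_mult_pair: "p \<otimes>\<^bsub>A \<times>\<times> B\<^esub> q = (fst p \<otimes>\<^bsub>A\<^esub> fst q, snd p \<otimes>\<^bsub>B\<^esub> snd q)"
  by (cases p; cases q) simp

lemma refine:
  fixes F :: "'i \<Rightarrow> ('g, 'c) monoid_scheme" and A B :: "('g, 'c) monoid_scheme"
  assumes sg: "sgrp I F" and i0: "i0 \<in> I" and b: "b \<notin> I" and gA: "group A" and gB: "group B"
    and \<alpha>: "\<alpha> \<in> iso (F i0) (A \<times>\<times> B)"
  shows "sum_group I F \<cong> sum_group (insert b I) (F(i0 := A, b := B))"
proof -
  define F' where "F' = F(i0 := A, b := B)"
  have bi0: "b \<noteq> i0" using b i0 by auto
  interpret S: sgrp I F by (rule sg)
  have F'i0: "F' i0 = A" and F'b: "F' b = B" and F'k: "\<And>k. k \<noteq> i0 \<Longrightarrow> k \<noteq> b \<Longrightarrow> F' k = F k"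
    using bi0 by (auto simp: F'_def)
  have F'kI: "\<And>k. k \<in> I \<Longrightarrow> k \<noteq> i0 \<Longrightarrow> F' k = F k" using F'k b by metis
  interpret T: sgrp "insert b I" F'
    unfolding sgrp_def using S.grp gA gB F'i0 F'b F'k by (metis insert_iff)
  interpret Fi0: group "F i0" using S.grp[OF i0] .
  interpret GA: group A by (rule gA)
  interpret GB: group B by (rule gB)
  have \<alpha>h: "\<alpha> \<in> hom (F i0) (A \<times>\<times> B)" and \<alpha>b: "bij_betw \<alpha> (carrier (F i0)) (carrier A \<times> carrier B)"
    using \<alpha> by (auto simp: iso_def)
  define \<alpha>' where "\<alpha>' = inv_into (carrier (F i0)) \<alpha>"
  have \<alpha>'C: "\<alpha>' p \<in> carrier (F i0)" if "p \<in> carrier A \<times> carrier B" for p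
    unfolding \<alpha>'_def using \<alpha>b that by (metis bij_betw_def inv_into_into)
  have \<alpha>\<alpha>': "\<alpha> (\<alpha>' p) = p" if "p \<in> carrier A \<times> carrier B" for p
    unfolding \<alpha>'_def using \<alpha>b that by (metis bij_betw_def f_inv_into_f)
  have \<alpha>'\<alpha>: "\<alpha>' (\<alpha> x) = x" if "x \<in> carrier (F i0)" for x
    unfolding \<alpha>'_def using \<alpha>b that by (metis bij_betw_def inv_into_f_f)
  have \<alpha>C: "\<alpha> x \<in> carrier A \<times> carrier B" if "x \<in> carrier (F i0)" for x
    using hom_in_carrier[OF \<alpha>h that] by simp
  define \<Phi> where "\<Phi> x = (\<lambda>k\<in>insert b I. if k = i0 then fst (\<alpha> (x i0)) else if k = b then snd (\<alpha> (x i0)) else x k)" for x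
  define \<Psi> where "\<Psi> z = (\<lambda>k\<in>I. if k = i0 then \<alpha>' (z i0, z b) else z k)" for z
  have \<Phi>C: "\<Phi> x \<in> carrier T.P" if x: "x \<in> carrier S.P" for x
  proof -
    have x0: "\<alpha> (x i0) \<in> carrier A \<times> carrier B" using \<alpha>C S.P_comp[OF x i0] by blast
    have "\<Phi> x \<in> (\<Pi>\<^sub>E k\<in>insert b I. carrier (F' k))"
      using x0 S.P_comp[OF x] F'i0 F'b F'k by (auto simp: \<Phi>_def PiE_iff mem_Times_iff)
    moreover have "{k \<in> insert b I. \<Phi> x k \<noteq> \<one>\<^bsub>F' k\<^esub>} \<subseteq> insert b (insert i0 {k \<in> I. x k \<noteq> \<one>\<^bsub>F k\<^esub>})"
      using F'k by (auto simp: \<Phi>_def)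
    then have "finite {k \<in> insert b I. \<Phi> x k \<noteq> \<one>\<^bsub>F' k\<^esub>}"
      using x by (auto simp: S.carrier_P intro: finite_subset)
    ultimately show ?thesis by (simp add: T.carrier_P)
  qed
  have \<Psi>C: "\<Psi> z \<in> carrier S.P" if z: "z \<in> carrier T.P" for z
  proof -
    have z0: "(z i0, z b) \<in> carrier A \<times> carrier B"
      using T.P_comp[OF z, of i0] T.P_comp[OF z, of b] i0 F'i0 F'b by auto
    have "\<Psi> z \<in> (\<Pi>\<^sub>E k\<in>I. carrier (F k))"
      using \<alpha>'C[OF z0] T.P_comp[OF z] F'k b by (auto simp: \<Psi>_def PiE_iff) (metis insertCI)
    moreover have "{k \<in> I. \<Psi> z k \<noteq> \<one>\<^bsub>F k\<^esub>} \<subseteq> insert i0 {k \<in> insert b I. z k \<noteq> \<one>\<^bsub>F' k\<^esub>}"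
      using F'kI b by (auto simp: \<Psi>_def)
    then have "finite {k \<in> I. \<Psi> z k \<noteq> \<one>\<^bsub>F k\<^esub>}"
      using z by (auto simp: T.carrier_P intro: finite_subset)
    ultimately show ?thesis by (simp add: S.carrier_P)
  qed
  have \<Psi>\<Phi>: "\<Psi> (\<Phi> x) = x" if x: "x \<in> carrier S.P" for x
  proof (rule S.P_eqI[OF \<Psi>C[OF \<Phi>C[OF x]] x])
    fix k assume k: "k \<in> I"
    show "\<Psi> (\<Phi> x) k = x k"
      using k bi0 b i0 \<alpha>'\<alpha>[OF S.P_comp[OF x i0]] by (auto simp: \<Psi>_def \<Phi>_def)
  qed
  have \<Phi>\<Psi>: "\<Phi> (\<Psi> z) = z" if z: "z \<in> carrier T.P" for z
  proof (rule T.P_eqI[OF \<Phi>C[OF \<Psi>C[OF z]] z])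
    have z0: "(z i0, z b) \<in> carrier A \<times> carrier B"
      using T.P_comp[OF z, of i0] T.P_comp[OF z, of b] i0 F'i0 F'b by auto
    fix k assume k: "k \<in> insert b I"
    show "\<Phi> (\<Psi> z) k = z k"
      using k bi0 b i0 \<alpha>\<alpha>'[OF z0] by (auto simp: \<Psi>_def \<Phi>_def)
  qed
  have \<Phi>h: "\<Phi> \<in> hom S.P T.P"
  proof (rule homI)
    show "\<Phi> x \<in> carrier T.P" if "x \<in> carrier S.P" for x using \<Phi>C[OF that] .
    fix x y assume x: "x \<in> carrier S.P" and y: "y \<in> carrier S.P"
    have xy: "x \<otimes>\<^bsub>S.P\<^esub> y \<in> carrier S.P" by (rule monoid.m_closed[OF group.is_monoid[OF S.group_P] x y])
    have a: "\<alpha> (x i0 \<otimes>\<^bsub>F i0\<^esub> y i0) = \<alpha> (x i0) \<otimes>\<^bsub>A \<times>\<times> B\<^esub> \<alpha> (y i0)"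
      using hom_mult[OF \<alpha>h S.P_comp[OF x i0] S.P_comp[OF y i0]] .
    have "\<Phi> (x \<otimes>\<^bsub>S.P\<^esub> y) = \<Phi> x \<otimes>\<^bsub>T.P\<^esub> \<Phi> y"
    proof (rule T.P_eqI[OF \<Phi>C[OF xy]])
      show "\<Phi> x \<otimes>\<^bsub>T.P\<^esub> \<Phi> y \<in> carrier T.P"
        by (rule monoid.m_closed[OF group.is_monoid[OF T.group_P] \<Phi>C[OF x] \<Phi>C[OF y]])
      fix k assume k: "k \<in> insert b I"
      show "\<Phi> (x \<otimes>\<^bsub>S.P\<^esub> y) k = (\<Phi> x \<otimes>\<^bsub>T.P\<^esub> \<Phi> y) k"
        using k bi0 b i0 a F'i0 F'b F'k by (auto simp: \<Phi>_def DirProd_mult_pair)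
    qed
    then show "\<Phi> (x \<otimes>\<^bsub>S.P\<^esub> y) = \<Phi> x \<otimes>\<^bsub>T.P\<^esub> \<Phi> y" .
  qed
  have "bij_betw \<Phi> (carrier S.P) (carrier T.P)"
    by (rule bij_betw_byWitness[where f' = \<Psi>]) (use \<Psi>\<Phi> \<Phi>\<Psi> \<Phi>C \<Psi>C in auto)
  then have "\<Phi> \<in> iso S.P T.P" using \<Phi>h by (rule isoI[rotated])
  then show ?thesis unfolding F'_def by (rule is_isoI)
qed

lemma fresh_idx:
  fixes G :: "('a, 'b) monoid_scheme" and I :: "'a set" and F :: "'a \<Rightarrow> ('g, 'c) monoid_scheme"
  assumes G: "group G" and fin: "finite I" and FI: "\<forall>i\<in>I. group (F i) \<and> carrier (F i) \<noteq> {\<one>\<^bsub>F i\<^esub>}"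
    and iso: "G \<cong> sum_group I F"
  shows "\<exists>b. b \<notin> I"
proof (rule ccontr)
  assume "\<not> (\<exists>b. b \<notin> I)"
  then have IU: "I = UNIV" by blast
  interpret A: sgrp I F using FI by (simp add: sgrp_def)
  interpret GG: group G by (rule G)
  interpret GP: group A.P by (rule A.group_P)
  obtain h where h: "h \<in> iso G A.P" using iso by (auto simp: is_iso_def)
  define h' where "h' = inv_into (carrier G) h"
  have h': "h' \<in> iso A.P G" unfolding h'_def by (rule GG.iso_set_sym[OF h])
  have h'h: "h' \<in> hom A.P G" and h'inj: "inj_on h' (carrier A.P)" using h' by (auto simp: iso_def bij_betw_def)
  have h'1: "h' \<one>\<^bsub>A.P\<^esub> = \<one>\<^bsub>G\<^esub>" by (rule hom_one'[OF A.group_P G h'h])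
  define x where "x i = (SOME y. y \<in> carrier (F i) \<and> y \<noteq> \<one>\<^bsub>F i\<^esub>)" for i
  have x: "x i \<in> carrier (F i) \<and> x i \<noteq> \<one>\<^bsub>F i\<^esub>" if "i \<in> I" for i
  proof -
    have "\<exists>y. y \<in> carrier (F i) \<and> y \<noteq> \<one>\<^bsub>F i\<^esub>" using FI that group.is_monoid monoid.one_closed by blast
    then show ?thesis unfolding x_def by (rule someI_ex)
  qed
  define f where "f i = h' (A.emb i (x i))" for i
  have fC: "f i \<in> UNIV - {\<one>\<^bsub>G\<^esub>}" if i: "i \<in> I" for i
  proof -
    have e: "A.emb i (x i) \<in> carrier A.P" using A.emb_carrier[OF i] x[OF i] by blast
    have "A.emb i (x i) \<noteq> \<one>\<^bsub>A.P\<^esub>"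
    proof
      assume "A.emb i (x i) = \<one>\<^bsub>A.P\<^esub>"
      then have "A.emb i (x i) i = \<one>\<^bsub>A.P\<^esub> i" by simp
      then show False using x[OF i] i by (simp add: A.emb_apply)
    qed
    then have "f i \<noteq> \<one>\<^bsub>G\<^esub>" using h'inj e GP.one_closed h'1 unfolding f_def inj_on_def by metis
    then show ?thesis by simp
  qed
  have finj: "inj_on f I"
  proof (rule inj_onI)
    fix i k assume i: "i \<in> I" and k: "k \<in> I" and e: "f i = f k"
    have ei: "A.emb i (x i) \<in> carrier A.P" using A.emb_carrier[OF i] x[OF i] by blast
    have ek: "A.emb k (x k) \<in> carrier A.P" using A.emb_carrier[OF k] x[OF k] by blast
    have "A.emb i (x i) = A.emb k (x k)" using h'inj ei ek e unfolding f_def inj_on_def by blast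
    then show "i = k" using A.emb_eq_idx[OF i k] x[OF i] by blast
  qed
  have finU: "finite (UNIV :: 'a set)" using fin IU by simp
  have "card I \<le> card (UNIV - {\<one>\<^bsub>G\<^esub>})"
    by (rule card_inj_on_le[OF finj]) (use fC finU in auto)
  also have "\<dots> < card (UNIV :: 'a set)"
  proof -
    have "card (UNIV :: 'a set) > 0" using finU by (simp add: card_gt_0_iff)
    then show ?thesis using finU by (simp add: card_Diff1_less)
  qed
  finally show False using IU by simp
qed

definition trunc_grp :: "('a, 'b) monoid_scheme \<Rightarrow> 'a monoid" where
  "trunc_grp G = \<lparr>carrier = carrier G, mult = mult G, one = one G\<rparr>"

lemma trunc_grp_group: "group G \<Longrightarrow> group (trunc_grp G)"
  unfolding group_def group_axioms_def monoid_def Units_def trunc_grp_def by simp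

lemma E1:
  fixes G :: "('a, 'b) monoid_scheme"
  assumes G: "group G"
  shows "\<exists>(I :: 'a set) (F :: 'a \<Rightarrow> 'a monoid). finite I \<and> (\<forall>i\<in>I. group (F i) \<and> carrier (F i) \<noteq> {\<one>\<^bsub>F i\<^esub>})
           \<and> G \<cong> sum_group I F"
proof -
  interpret GG: group G by (rule G)
  define G0 where "G0 = trunc_grp G"
  have gG0: "group G0" unfolding G0_def by (rule trunc_grp_group[OF G])
  show ?thesis
  proof (cases "carrier G = {\<one>\<^bsub>G\<^esub>}")
    case True
    define F :: "'a \<Rightarrow> 'a monoid" where "F = (\<lambda>_. G0)"
    have cP: "carrier (sum_group {} F) = {\<lambda>_. undefined}"
      by (subst carrier_sum_group) (auto simp: PiE_empty_domain)
    define h :: "'a \<Rightarrow> 'a \<Rightarrow> 'a" where "h = (\<lambda>_ _. undefined)"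
    have "h \<in> iso G (sum_group {} F)"
    proof (rule isoI)
      show "h \<in> hom G (sum_group {} F)" by (rule homI) (auto simp: cP h_def)
      show "bij_betw h (carrier G) (carrier (sum_group {} F))"
        using True by (auto simp: cP h_def bij_betw_def)
    qed
    then have "G \<cong> sum_group {} F" by (rule is_isoI)
    then show ?thesis by blast
  next
    case False
    define c :: 'a where "c = undefined"
    define F :: "'a \<Rightarrow> 'a monoid" where "F = (\<lambda>_. G0)"
    have cP: "carrier (sum_group {c} F) = (\<lambda>x. \<lambda>k\<in>{c}. x) ` carrier G"
    proof -
      have "carrier (sum_group {c} F) = {x \<in> \<Pi>\<^sub>E i\<in>{c}. carrier (F i). finite {i \<in> {c}. x i \<noteq> \<one>\<^bsub>F i\<^esub>}}"
        by (rule carrier_sum_group) (simp add: F_def gG0)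
      also have "\<dots> = (\<Pi>\<^sub>E i\<in>{c}. carrier G)" by (auto simp: F_def G0_def trunc_grp_def)
      also have "\<dots> = (\<lambda>x. \<lambda>k\<in>{c}. x) ` carrier G"
      proof
        show "(\<Pi>\<^sub>E i\<in>{c}. carrier G) \<subseteq> (\<lambda>x. \<lambda>k\<in>{c}. x) ` carrier G"
        proof
          fix f assume f: "f \<in> (\<Pi>\<^sub>E i\<in>{c}. carrier G)"
          then have "f = (\<lambda>k\<in>{c}. f c)" by (auto simp: PiE_iff extensional_def)
          then show "f \<in> (\<lambda>x. \<lambda>k\<in>{c}. x) ` carrier G" using f by (metis PiE_mem image_eqI singletonI)
        qed
        show "(\<lambda>x. \<lambda>k\<in>{c}. x) ` carrier G \<subseteq> (\<Pi>\<^sub>E i\<in>{c}. carrier G)"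
        proof
          fix y assume "y \<in> (\<lambda>x. \<lambda>k\<in>{c}. x) ` carrier G"
          then obtain x where x: "x \<in> carrier G" "y = (\<lambda>k\<in>{c}. x)" by blast
          have "(\<lambda>k\<in>{c}. x) \<in> (\<Pi>\<^sub>E i\<in>{c}. carrier G)" using x(1) by (subst restrict_PiE_iff) blast
          then show "y \<in> (\<Pi>\<^sub>E i\<in>{c}. carrier G)" using x(2) by simp
        qed
      qed
      finally show ?thesis .
    qed
    define h :: "'a \<Rightarrow> 'a \<Rightarrow> 'a" where "h = (\<lambda>x. \<lambda>k\<in>{c}. x)"
    have "h \<in> iso G (sum_group {c} F)"
    proof (rule isoI)
      show "h \<in> hom G (sum_group {c} F)"
      proof (rule homI)
        show "h x \<in> carrier (sum_group {c} F)" if "x \<in> carrier G" for x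
          unfolding cP h_def using that by blast
        show "h (x \<otimes>\<^bsub>G\<^esub> y) = h x \<otimes>\<^bsub>sum_group {c} F\<^esub> h y" if "x \<in> carrier G" "y \<in> carrier G" for x y
          by (auto simp: h_def F_def G0_def trunc_grp_def)
      qed
      show "bij_betw h (carrier G) (carrier (sum_group {c} F))"
        unfolding cP h_def by (rule bij_betw_imageI) (auto simp: inj_on_def fun_eq_iff)
    qed
    then have "G \<cong> sum_group {c} F" by (rule is_isoI)
    moreover have "carrier (F c) \<noteq> {\<one>\<^bsub>F c\<^esub>}" using False by (simp add: F_def G0_def trunc_grp_def)
    ultimately show ?thesis using gG0 unfolding F_def by (intro exI[of _ "{c}"] exI[of _ F]) (auto simp: F_def)
  qed
qed

theorem proposition14:
  fixes G :: "('a, 'b) monoid_scheme"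
  assumes "group G"
    and "linear_group_over TYPE('k::field) G"
    and "finitely_generated_group G"
    and "group_center G = {\<one>\<^bsub>G\<^esub>}"
  shows "uniquely_directly_decomposable G"
proof -
  note G = assms(1) and Z = assms(4)
  interpret GG: group G by (rule G)
  obtain d and \<phi> :: "'a \<Rightarrow> 'k mat" where phih: "\<phi> \<in> hom G (GL_group d TYPE('k))" and phii: "inj_on \<phi> (carrier G)"
    using assms(2) unfolding linear_group_over_def by blast
  define D where "D = {n. \<exists>(I :: 'a set) (F :: 'a \<Rightarrow> 'a monoid). finite I \<and> card I = n \<and>
        (\<forall>i\<in>I. group (F i) \<and> carrier (F i) \<noteq> {\<one>\<^bsub>F i\<^esub>}) \<and> G \<cong> sum_group I F}"
  have Dbd: "D \<subseteq> {..d*d}"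
  proof
    fix n assume "n \<in> D"
    then obtain I and F :: "'a \<Rightarrow> 'a monoid" where "card I = n" "\<forall>i\<in>I. group (F i) \<and> carrier (F i) \<noteq> {\<one>\<^bsub>F i\<^esub>}"
      "G \<cong> sum_group I F" unfolding D_def by blast
    then show "n \<in> {..d*d}" using E2[OF G phih phii Z] by auto
  qed
  have Dne: "D \<noteq> {}" using E1[OF G] unfolding D_def by blast
  have Dfin: "finite D" using Dbd finite_subset by blast
  define n where "n = Max D"
  have "n \<in> D" unfolding n_def using Dfin Dne by (rule Max_in)
  then obtain I and F :: "'a \<Rightarrow> 'a monoid" where finI: "finite I" and cI: "card I = n"
    and FI: "\<forall>i\<in>I. group (F i) \<and> carrier (F i) \<noteq> {\<one>\<^bsub>F i\<^esub>}" and isoI: "G \<cong> sum_group I F"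
    unfolding D_def by blast
  have ind: "indecomposable_group (F i)" if i: "i \<in> I" for i
    unfolding indecomposable_group_def
  proof (intro conjI allI impI)
    show "group (F i)" "carrier (F i) \<noteq> {\<one>\<^bsub>F i\<^esub>}" using FI i by auto
    fix A B :: "'a monoid"
    assume AB: "group A \<and> group B \<and> F i \<cong> A \<times>\<times> B"
    show "carrier A = {\<one>\<^bsub>A\<^esub>} \<or> carrier B = {\<one>\<^bsub>B\<^esub>}"
    proof (rule ccontr)
      assume nt: "\<not> (carrier A = {\<one>\<^bsub>A\<^esub>} \<or> carrier B = {\<one>\<^bsub>B\<^esub>})"
      obtain b where b: "b \<notin> I" using fresh_idx[OF G finI FI isoI] by blast
      obtain \<alpha> where \<alpha>: "\<alpha> \<in> iso (F i) (A \<times>\<times> B)" using AB by (auto simp: is_iso_def)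
      have sg: "sgrp I F" using FI by (simp add: sgrp_def)
      have "sum_group I F \<cong> sum_group (insert b I) (F(i := A, b := B))"
        using refine[OF sg i b _ _ \<alpha>] AB by blast
      then have iso2: "G \<cong> sum_group (insert b I) (F(i := A, b := B))" using isoI iso_trans by blast
      have bi: "b \<noteq> i" using b i by auto
      have F2: "\<forall>k\<in>insert b I. group ((F(i := A, b := B)) k) \<and>
                  carrier ((F(i := A, b := B)) k) \<noteq> {\<one>\<^bsub>(F(i := A, b := B)) k\<^esub>}"
        using FI AB nt bi by auto
      have "card (insert b I) = n + 1" using finI b cI by simp
      then have "n + 1 \<in> D" unfolding D_def using finI iso2 F2 by blast
      then have "n + 1 \<le> n" unfolding n_def using Dfin by (simp add: Max_ge)
      then show False by simp
    qed
  qed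
  have ex: "\<exists>I F. direct_decomposition G I F"
    using ind isoI unfolding direct_decomposition_def by blast
  have uq: "\<exists>\<sigma>. bij_betw \<sigma> I1 J1 \<and> (\<forall>i\<in>I1. F1 i \<cong> F1' (\<sigma> i))"
    if d1: "direct_decomposition G I1 F1" and d2: "direct_decomposition G J1 F1'" for I1 F1 J1 F1'
  proof -
    have i1: "\<forall>i\<in>I1. indecomposable_group (F1 i)" and h1: "G \<cong> sum_group I1 F1"
      using d1 by (auto simp: direct_decomposition_def)
    have i2: "\<forall>j\<in>J1. indecomposable_group (F1' j)" and h2: "G \<cong> sum_group J1 F1'"
      using d2 by (auto simp: direct_decomposition_def)
    have gP: "group (sum_group I1 F1)" using i1 by (intro sum_group) (auto simp: indecomposable_group_def)
    have gQ: "group (sum_group J1 F1')" using i2 by (intro sum_group) (auto simp: indecomposable_group_def)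
    obtain f1 where f1: "f1 \<in> iso G (sum_group I1 F1)" using h1 by (auto simp: is_iso_def)
    obtain f2 where f2: "f2 \<in> iso G (sum_group J1 F1')" using h2 by (auto simp: is_iso_def)
    have ZP: "group_center (sum_group I1 F1) = {\<one>\<^bsub>sum_group I1 F1\<^esub>}" by (rule center_iso[OF G gP f1 Z])
    have ZQ: "group_center (sum_group J1 F1') = {\<one>\<^bsub>sum_group J1 F1'\<^esub>}" by (rule center_iso[OF G gQ f2 Z])
    have "f2 \<circ> inv_into (carrier G) f1 \<in> iso (sum_group I1 F1) (sum_group J1 F1')"
      by (rule iso_set_trans[OF GG.iso_set_sym[OF f1] f2])
    then show ?thesis by (rule U2[OF i1 i2 _ ZP ZQ])
  qed
  show ?thesis unfolding uniquely_directly_decomposable_def using ex uq by blast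
qed

end
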